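(* There is no continuous real function on $\widetilde{\mathrm{Sp}}(2n)$ which is strictly increasing along every timelike curve and invariant under conjugacy.
   Context: $\omega_0=\sum_j\mathrm{d}x_j\wedge\mathrm{d}y_j$ on $\mathbb{R}^{2n}$, $\mathrm{Sp}(2n)$ its linear symplectic group, $\widetilde{\mathrm{Sp}}(2n)$ its universal cover (a Lie group). $\mathrm{sp}(2n)=\{X:(u,v)\mapsto\omega_0(u,Xv)\text{ symmetric}\}$ and $\mathrm{sp}^+(2n)$ the subset where this form is positive definite. A $C^1$ curve $W$ in $\mathrm{Sp}(2n)$ is timelike if $W'(t)W(t)^{-1}\in\mathrm{sp}^+(2n)$ for all $t$; a curve in $\widetilde{\mathrm{Sp}}(2n)$ is timelike if its projection is. *)

theory Defs
  imports "HOL-Analysis.Analysis" "HOL-Algebra.Group"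
begin

text \<open>Coordinates on R^{2n}: index Inl j is x_j, index Inr j is y_j.\<close>

type_synonym 'n sympl_vec = "real ^ ('n + 'n)"
type_synonym 'n sympl_mat = "real ^ ('n + 'n) ^ ('n + 'n)"

definition omega0 :: "'n::finite sympl_vec \<Rightarrow> 'n sympl_vec \<Rightarrow> real" where
  "omega0 u v = (\<Sum>j\<in>UNIV. u $ Inl j * v $ Inr j - u $ Inr j * v $ Inl j)"

definition Sp :: "'n::finite sympl_mat set" where
  "Sp = {A. \<forall>u v. omega0 (A *v u) (A *v v) = omega0 u v}"

definition sp :: "'n::finite sympl_mat set" where
  "sp = {X. \<forall>u v. omega0 u (X *v v) = omega0 v (X *v u)}"

definition sp_plus :: "'n::finite sympl_mat set" where
  "sp_plus = {X \<in> sp. \<forall>u. u \<noteq> 0 \<longrightarrow> omega0 u (X *v u) > 0}"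

definition timelike_curve :: "(real \<Rightarrow> 'n::finite sympl_mat) \<Rightarrow> real \<Rightarrow> real \<Rightarrow> bool" where
  "timelike_curve W a b \<longleftrightarrow> a < b \<and> (\<forall>t\<in>{a..b}. W t \<in> Sp) \<and>
     (\<exists>W'. (\<forall>t\<in>{a..b}. (W has_vector_derivative W' t) (at t within {a..b})) \<and>
           continuous_on {a..b} W' \<and>
           (\<forall>t\<in>{a..b}. W' t ** matrix_inv (W t) \<in> sp_plus))"

definition universal_cover_Sp ::
  "'g::topological_space set \<Rightarrow> ('g \<Rightarrow> 'g \<Rightarrow> 'g) \<Rightarrow> 'g \<Rightarrow> ('g \<Rightarrow> 'n::finite sympl_mat) \<Rightarrow> bool" where
  "universal_cover_Sp G mul e p \<longleftrightarrow>
     group \<lparr>carrier = G, mult = mul, one = e\<rparr> \<and>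
     continuous_on (G \<times> G) (\<lambda>z. mul (fst z) (snd z)) \<and>
     continuous_on G (m_inv \<lparr>carrier = G, mult = mul, one = e\<rparr>) \<and>
     (\<forall>x\<in>G. \<forall>y\<in>G. p (mul x y) = p x ** p y) \<and>
     covering_space G p Sp \<and>
     simply_connected G"

definition timelike_lift ::
  "'g::topological_space set \<Rightarrow> ('g \<Rightarrow> 'n::finite sympl_mat) \<Rightarrow> (real \<Rightarrow> 'g) \<Rightarrow> real \<Rightarrow> real \<Rightarrow> bool" where
  "timelike_lift G p \<gamma> a b \<longleftrightarrow> \<gamma> ` {a..b} \<subseteq> G \<and> continuous_on {a..b} \<gamma> \<and>
     timelike_curve (p \<circ> \<gamma>) a b"

end

theory Submission imports Defs begin

definition blk :: "real \<Rightarrow> real \<Rightarrow> real \<Rightarrow> real \<Rightarrow> 'n::finite sympl_mat" where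
  "blk a b c d = (\<chi> i k. case_sum (\<lambda>i. case_sum (\<lambda>k. if i = k then a else 0) (\<lambda>k. if i = k then b else 0) k)
                                  (\<lambda>i. case_sum (\<lambda>k. if i = k then c else 0) (\<lambda>k. if i = k then d else 0) k) i)"

lemma blk_nth [simp]:
  "blk a b c d $ Inl i $ Inl k = (if i = k then a else 0)"
  "blk a b c d $ Inl i $ Inr k = (if i = k then b else 0)"
  "blk a b c d $ Inr i $ Inl k = (if i = k then c else 0)"
  "blk a b c d $ Inr i $ Inr k = (if i = k then d else 0)"
  by (simp_all add: blk_def)

lemma sum_UNIV_Plus: "sum g (UNIV::('a::finite + 'b::finite) set) = sum (g \<circ> Inl) UNIV + sum (g \<circ> Inr) UNIV"
  by (subst UNIV_Plus_UNIV[symmetric]) (rule sum.Plus, auto)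

lemma mat_eqI4:
  fixes A B :: "'n::finite sympl_mat"
  assumes "\<And>i k. A $ Inl i $ Inl k = B $ Inl i $ Inl k"
          "\<And>i k. A $ Inl i $ Inr k = B $ Inl i $ Inr k"
          "\<And>i k. A $ Inr i $ Inl k = B $ Inr i $ Inl k"
          "\<And>i k. A $ Inr i $ Inr k = B $ Inr i $ Inr k"
  shows "A = B"
proof -
  have "A $ i $ k = B $ i $ k" for i k using assms by (cases i; cases k) auto
  then show ?thesis by (simp add: vec_eq_iff)
qed

lemma blk_mult: "(blk a b c d :: 'n::finite sympl_mat) ** blk a' b' c' d' =
   blk (a*a' + b*c') (a*b' + b*d') (c*a' + d*c') (c*b' + d*d')"
  by (rule mat_eqI4) (simp_all add: matrix_matrix_mult_def sum_UNIV_Plus o_def if_distrib if_distribR sum.If_cases)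

lemma blk_one: "(mat 1 :: 'n::finite sympl_mat) = blk 1 0 0 1"
  by (rule mat_eqI4) (simp_all add: mat_def)

lemma blk_add: "blk a b c d + blk a' b' c' d' = (blk (a+a') (b+b') (c+c') (d+d') :: 'n::finite sympl_mat)"
  by (rule mat_eqI4) auto

lemma blk_scaleR: "r *\<^sub>R blk a b c d = (blk (r*a) (r*b) (r*c) (r*d) :: 'n::finite sympl_mat)"
  by (rule mat_eqI4) auto

lemma blk_mulv [simp]:
  "(blk a b c d *v u) $ Inl j = a * u $ Inl j + b * u $ Inr j"
  "(blk a b c d *v u) $ Inr j = c * u $ Inl j + d * u $ Inr j"
  by (simp_all add: matrix_vector_mult_def sum_UNIV_Plus o_def if_distrib if_distribR sum.If_cases)

lemma omega0_blk: "omega0 (blk a b c d *v u) (blk a b c d *v v) = (a*d - b*c) * omega0 u v"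
  unfolding omega0_def sum_distrib_left
  by (rule sum.cong) (simp_all add: algebra_simps)

lemma blk_cong: "a = a' \<Longrightarrow> b = b' \<Longrightarrow> c = c' \<Longrightarrow> d = d' \<Longrightarrow> blk a b c d = blk a' b' c' d'"
  by simp

lemma blk_in_Sp: "a*d - b*c = 1 \<Longrightarrow> (blk a b c d :: 'n::finite sympl_mat) \<in> Sp"
  by (simp add: Sp_def omega0_blk)

lemma matrix_inv_eq:
  fixes A B :: "'n::finite sympl_mat"
  assumes "A ** B = mat 1" "B ** A = mat 1"
  shows "matrix_inv A = B"
  unfolding matrix_inv_def
proof (rule some_equality)
  fix B' assume "A ** B' = mat 1 \<and> B' ** A = mat 1"
  then have "B' = B' ** (A ** B)" "B' ** A = mat 1" using assms by (simp_all add: matrix_mul_rid)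
  then show "B' = B" by (metis matrix_mul_assoc matrix_mul_lid)
qed (use assms in auto)

lemma omega0_blk_form: "omega0 u (blk p q r s *v v) =
   (\<Sum>j\<in>UNIV. u $ Inl j * (r * v $ Inl j + s * v $ Inr j) - u $ Inr j * (p * v $ Inl j + q * v $ Inr j))"
  by (simp add: omega0_def)

lemma quad_pos:
  fixes p q r x y :: real
  assumes "r > 0" "p^2 < r * (-q)" "x \<noteq> 0 \<or> y \<noteq> 0"
  shows "x * (r * x - p * y) - y * (p * x + q * y) > 0"
proof -
  have e: "r * (x * (r * x - p * y) - y * (p * x + q * y)) = (r*x - p*y)^2 + (r*(-q) - p^2) * y^2"
    by (simp add: algebra_simps power2_eq_square)
  have "(r*x - p*y)^2 + (r*(-q) - p^2) * y^2 > 0"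
  proof (cases "y = 0")
    case True then have "x \<noteq> 0" using assms by auto
    then show ?thesis using True assms by simp
  next
    case False then show ?thesis using assms
      by (intro add_nonneg_pos) auto
  qed
  then show ?thesis using e assms(1) by (metis zero_less_mult_pos)
qed

lemma quad_nonneg:
  fixes p q r x y :: real
  assumes "r > 0" "p^2 < r * (-q)"
  shows "x * (r * x - p * y) - y * (p * x + q * y) \<ge> 0"
  using quad_pos[OF assms, of x y] by (cases "x = 0 \<and> y = 0") auto

lemma blk_sp_plus:
  fixes p q r :: real
  assumes "r > 0" "p^2 < r * (-q)"
  shows "(blk p q r (-p) :: 'n::finite sympl_mat) \<in> sp_plus"
proof -
  have sp: "blk p q r (-p) \<in> (sp :: 'n sympl_mat set)"
    unfolding sp_def mem_Collect_eq omega0_blk_form by (auto intro!: sum.cong simp: algebra_simps)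
  have "omega0 u (blk p q r (-p) *v u) > 0" if "u \<noteq> 0" for u :: "'n sympl_vec"
  proof -
    obtain i where "u $ i \<noteq> 0" using \<open>u \<noteq> 0\<close> by (auto simp: vec_eq_iff)
    then obtain j where j: "u $ Inl j \<noteq> 0 \<or> u $ Inr j \<noteq> 0" by (cases i) auto
    let ?g = "\<lambda>j. u $ Inl j * (r * u $ Inl j - p * u $ Inr j) - u $ Inr j * (p * u $ Inl j + q * u $ Inr j)"
    have "0 < ?g j" using quad_pos[OF assms j] .
    also have "?g j \<le> sum ?g UNIV"
      by (rule member_le_sum) (use quad_nonneg[OF assms] in auto)
    finally show ?thesis unfolding omega0_blk_form by (simp add: algebra_simps)
  qed
  with sp show ?thesis by (simp add: sp_plus_def)
qed

lemma blk_decomp: "(blk a b c d :: 'n::finite sympl_mat) =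
  a *\<^sub>R blk 1 0 0 0 + b *\<^sub>R blk 0 1 0 0 + c *\<^sub>R blk 0 0 1 0 + d *\<^sub>R blk 0 0 0 1"
  by (simp add: blk_add blk_scaleR)

lemma blk_deriv:
  assumes "(a has_real_derivative a') (at t within S)" "(b has_real_derivative b') (at t within S)"
    "(c has_real_derivative c') (at t within S)" "(d has_real_derivative d') (at t within S)"
  shows "((\<lambda>t. blk (a t) (b t) (c t) (d t) :: 'n::finite sympl_mat) has_vector_derivative blk a' b' c' d') (at t within S)"
proof -
  define E1 E2 E3 E4 where "E1 = (blk 1 0 0 0 :: 'n sympl_mat)" "E2 = (blk 0 1 0 0 :: 'n sympl_mat)"
    "E3 = (blk 0 0 1 0 :: 'n sympl_mat)" "E4 = (blk 0 0 0 1 :: 'n sympl_mat)"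
  have e1: "(\<lambda>t. blk (a t) (b t) (c t) (d t) :: 'n::finite sympl_mat) =
     (\<lambda>t. a t *\<^sub>R E1 + b t *\<^sub>R E2 + c t *\<^sub>R E3 + d t *\<^sub>R E4)"
    unfolding E1_E2_E3_E4_def by (rule ext, rule blk_decomp)
  have e2: "(blk a' b' c' d' :: 'n sympl_mat) = a' *\<^sub>R E1 + b' *\<^sub>R E2 + c' *\<^sub>R E3 + d' *\<^sub>R E4"
    unfolding E1_E2_E3_E4_def by (rule blk_decomp)
  show ?thesis unfolding e1 e2
    apply (intro has_vector_derivative_add)
    using has_vector_derivative_scaleR[OF assms(1) has_vector_derivative_const]
      has_vector_derivative_scaleR[OF assms(2) has_vector_derivative_const]
      has_vector_derivative_scaleR[OF assms(3) has_vector_derivative_const]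
      has_vector_derivative_scaleR[OF assms(4) has_vector_derivative_const]
    by auto
qed

lemma blk_cont:
  assumes "continuous_on S a" "continuous_on S b" "continuous_on S c" "continuous_on S d"
  shows "continuous_on S (\<lambda>t. blk (a t) (b t) (c t) (d t) :: 'n::finite sympl_mat)"
  apply (subst blk_decomp)
  by (intro continuous_intros assms)

theorem proposition9p3:
  fixes G :: "'g::topological_space set" and mul :: "'g \<Rightarrow> 'g \<Rightarrow> 'g" and e :: 'g
    and p :: "'g \<Rightarrow> 'n::finite sympl_mat"
  assumes "universal_cover_Sp G mul e p"
  shows "\<not> (\<exists>f :: 'g \<Rightarrow> real.
             continuous_on G f \<and>
             (\<forall>g\<in>G. \<forall>h\<in>G.
                f (mul (mul h g) (m_inv \<lparr>carrier = G, mult = mul, one = e\<rparr> h)) = f g) \<and>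
             (\<forall>\<gamma> a b. timelike_lift G p \<gamma> a b \<longrightarrow>
                (\<forall>s t. a \<le> s \<and> s < t \<and> t \<le> b \<longrightarrow> f (\<gamma> s) < f (\<gamma> t))))"
proof
  assume "\<exists>f :: 'g \<Rightarrow> real.
             continuous_on G f \<and>
             (\<forall>g\<in>G. \<forall>h\<in>G.
                f (mul (mul h g) (m_inv \<lparr>carrier = G, mult = mul, one = e\<rparr> h)) = f g) \<and>
             (\<forall>\<gamma> a b. timelike_lift G p \<gamma> a b \<longrightarrow>
                (\<forall>s t. a \<le> s \<and> s < t \<and> t \<le> b \<longrightarrow> f (\<gamma> s) < f (\<gamma> t)))"
  then obtain f :: "'g \<Rightarrow> real" where
    finv: "\<And>g h. g \<in> G \<Longrightarrow> h \<in> G \<Longrightarrow> f (mul (mul h g) (m_inv \<lparr>carrier = G, mult = mul, one = e\<rparr> h)) = f g"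
    and fincr: "\<And>\<gamma> a b s t. timelike_lift G p \<gamma> a b \<Longrightarrow> a \<le> s \<Longrightarrow> s < t \<Longrightarrow> t \<le> b \<Longrightarrow> f (\<gamma> s) < f (\<gamma> t)"
    by blast
  define iv where "iv = m_inv \<lparr>carrier = G, mult = mul, one = e\<rparr>"
  have grp: "group \<lparr>carrier = G, mult = mul, one = e\<rparr>"
    and cmul: "continuous_on (G \<times> G) (\<lambda>z. mul (fst z) (snd z))"
    and cinv: "continuous_on G iv"
    and hom: "\<And>x y. x \<in> G \<Longrightarrow> y \<in> G \<Longrightarrow> p (mul x y) = p x ** p y"
    and cov: "covering_space G p Sp"
    using assms unfolding universal_cover_Sp_def iv_def by auto
  interpret grp: group "\<lparr>carrier = G, mult = mul, one = e\<rparr>" by (rule grp)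
  have eG: "e \<in> G" using grp.one_closed by simp
  have mulG: "\<And>x y. x \<in> G \<Longrightarrow> y \<in> G \<Longrightarrow> mul x y \<in> G" using grp.m_closed by simp
  have ivG: "\<And>x. x \<in> G \<Longrightarrow> iv x \<in> G" using grp.inv_closed unfolding iv_def by simp
  have rinv: "\<And>x. x \<in> G \<Longrightarrow> mul x (iv x) = e" using grp.r_inv unfolding iv_def by simp
  have lone: "\<And>x. x \<in> G \<Longrightarrow> mul e x = x" using grp.l_one by simp
  have rone: "\<And>x. x \<in> G \<Longrightarrow> mul x e = x" using grp.r_one by simp
  have iv_e: "iv e = e" using grp.inv_one unfolding iv_def by simp
  have surj: "p ` G = Sp" using cov by (rule covering_space_imp_surjective)
  have one_Sp: "(mat 1 :: 'n sympl_mat) \<in> Sp" by (simp add: blk_one blk_in_Sp)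
  then obtain x1 where x1: "x1 \<in> G" "p x1 = mat 1" using surj by force
  have pe: "p e = mat 1"
  proof -
    have "p x1 = p x1 ** p e" using hom[OF x1(1) eG] rone[OF x1(1)] by simp
    then show ?thesis using x1(2) by (simp add: matrix_mul_lid)
  qed
  define cf :: "real \<Rightarrow> 'n sympl_mat" where "cf t = blk 1 t t (1+t^2)" for t
  define ci :: "real \<Rightarrow> 'n sympl_mat" where "ci t = blk (1+t^2) (-t) (-t) 1" for t
  define w0 :: "'n sympl_mat" where "w0 = blk 2 0 0 (1/2)"
  define Wf :: "real \<Rightarrow> 'n sympl_mat" where
    "Wf t = blk (2 + 3/2*t^2) (-3/2*t) (3/2*t*(1+t^2)) ((1-3*t^2)/2)" for t
  define Wd :: "real \<Rightarrow> 'n sympl_mat" where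
    "Wd t = blk (3*t) (-3/2) (3/2 + 9/2*t^2) (-3*t)" for t
  define Wi :: "real \<Rightarrow> 'n sympl_mat" where
    "Wi t = blk ((1-3*t^2)/2) (3/2*t) (-3/2*t*(1+t^2)) (2+3/2*t^2)" for t
  have cf_ci: "cf t ** ci t = mat 1" for t
    by (simp add: cf_def ci_def blk_mult blk_one algebra_simps power2_eq_square)
  have ci_cf: "ci t ** cf t = mat 1" for t
    by (simp add: cf_def ci_def blk_mult blk_one algebra_simps power2_eq_square)
  have cf_Sp: "cf t \<in> Sp" for t unfolding cf_def by (rule blk_in_Sp) (simp add: power2_eq_square)
  have w0_Sp: "w0 \<in> Sp" unfolding w0_def by (rule blk_in_Sp) simp
  have Wf_eq: "cf t ** w0 ** ci t = Wf t" for t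
    unfolding cf_def ci_def w0_def Wf_def blk_mult by (rule blk_cong; simp add: field_simps power2_eq_square)
  have Wf_Wi: "Wf t ** Wi t = mat 1" for t
    unfolding Wf_def Wi_def blk_mult blk_one by (rule blk_cong; simp add: field_simps power2_eq_square power3_eq_cube)
  have Wi_Wf: "Wi t ** Wf t = mat 1" for t
    unfolding Wf_def Wi_def blk_mult blk_one by (rule blk_cong; simp add: field_simps power2_eq_square power3_eq_cube)
  have X_eq: "Wd t ** Wi t = blk (15/4*t - 9/4*t^3) (9/4*t^2 - 3) (3/4 + 9/2*t^2 - 9/4*t^4) (-(15/4*t - 9/4*t^3))" for t
    unfolding Wd_def Wi_def blk_mult by (rule blk_cong; simp add: field_simps power2_eq_square power3_eq_cube power4_eq_xxxx)
  have covH: "\<forall>x \<in> Sp. \<exists>T. x \<in> T \<and> openin (top_of_set Sp) T \<and>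
                    (\<exists>v. \<Union>v = G \<inter> p -` T \<and>
                        (\<forall>u \<in> v. openin (top_of_set G) u) \<and>
                        pairwise disjnt v \<and>
                        (\<forall>u \<in> v. \<exists>q. homeomorphism u T p q))"
    using cov unfolding covering_space_def by (elim conjE)
  obtain T where T: "mat 1 \<in> T" "openin (top_of_set Sp) T" and
    vs: "\<exists>v. \<Union>v = G \<inter> p -` T \<and> (\<forall>u \<in> v. openin (top_of_set G) u) \<and>
                        pairwise disjnt v \<and> (\<forall>u \<in> v. \<exists>q. homeomorphism u T p q)"
    using bspec[OF covH one_Sp] by (elim exE conjE) blast
  from vs obtain v where vv: "\<Union>v = G \<inter> p -` T \<and> (\<forall>u \<in> v. openin (top_of_set G) u) \<and>
                        pairwise disjnt v \<and> (\<forall>u \<in> v. \<exists>q. homeomorphism u T p q)"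
    by (rule exE)
  have v1: "\<Union>v = G \<inter> p -` T" using vv by (rule conjunct1)
  have v2: "\<forall>u\<in>v. \<exists>q. homeomorphism u T p q" using vv by (elim conjE)
  have "e \<in> G \<inter> p -` T" using eG pe T(1) by simp
  then have "e \<in> \<Union>v" by (simp only: v1)
  then obtain u where u: "u \<in> v" "e \<in> u" by (rule UnionE)
  obtain q where q: "homeomorphism u T p q" using bspec[OF v2 u(1)] by (rule exE)
  have v: "\<Union>v = G \<inter> p -` T" by (rule v1)
  have uG: "u \<subseteq> G" using u v(1) by blast
  obtain U where U: "open U" "T = Sp \<inter> U" using T(2) by (auto simp: openin_open)
  have ccf: "continuous_on UNIV cf" unfolding cf_def by (intro blk_cont continuous_intros)
  have "open (cf -` U)" by (rule open_vimage[OF U(1) ccf])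
  moreover have "0 \<in> cf -` U" using T(1) U(2) by (simp add: cf_def blk_one[symmetric])
  ultimately obtain d where d: "d > 0" "ball 0 d \<subseteq> cf -` U" by (meson open_contains_ball)
  define b where "b = min (1/2) (d/2)"
  have b: "b > 0" "b \<le> 1/2" "b < d" using d by (auto simp: b_def)
  have cfT: "cf t \<in> T" if "t \<in> {0..b}" for t
    using that b d cf_Sp U(2) by (auto simp: subset_iff dist_real_def)
  define \<sigma> where "\<sigma> t = q (cf t)" for t
  have qT: "\<And>y. y \<in> T \<Longrightarrow> q y \<in> u" "\<And>y. y \<in> T \<Longrightarrow> p (q y) = y" "\<And>x. x \<in> u \<Longrightarrow> q (p x) = x"
    and cq: "continuous_on T q"
    using q unfolding homeomorphism_def by auto
  have \<sigma>G: "\<sigma> t \<in> G" if "t \<in> {0..b}" for t using qT(1)[OF cfT[OF that]] uG \<sigma>_def by auto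
  have p\<sigma>: "p (\<sigma> t) = cf t" if "t \<in> {0..b}" for t using qT(2)[OF cfT[OF that]] \<sigma>_def by auto
  have \<sigma>0: "\<sigma> 0 = e" using qT(3)[OF u(2)] pe by (simp add: \<sigma>_def cf_def blk_one)
  have c\<sigma>: "continuous_on {0..b} \<sigma>" unfolding \<sigma>_def
    by (rule continuous_on_compose2[OF cq continuous_on_subset[OF ccf]]) (use cfT in auto)
  obtain g0 where g0: "g0 \<in> G" "p g0 = w0" using w0_Sp surj by force
  define \<gamma> where "\<gamma> t = mul (mul (\<sigma> t) g0) (iv (\<sigma> t))" for t
  have \<gamma>G: "\<gamma> t \<in> G" if "t \<in> {0..b}" for t
    unfolding \<gamma>_def using \<sigma>G[OF that] g0 mulG ivG by auto
  have piv: "p (iv (\<sigma> t)) = ci t" if "t \<in> {0..b}" for t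
  proof -
    have "cf t ** p (iv (\<sigma> t)) = mat 1"
      using hom[OF \<sigma>G[OF that] ivG[OF \<sigma>G[OF that]]] rinv[OF \<sigma>G[OF that]] pe p\<sigma>[OF that] by simp
    then have "ci t ** (cf t ** p (iv (\<sigma> t))) = ci t" by (simp add: matrix_mul_rid)
    then show ?thesis by (simp add: matrix_mul_assoc ci_cf matrix_mul_lid)
  qed
  have p\<gamma>: "p (\<gamma> t) = Wf t" if "t \<in> {0..b}" for t
    unfolding \<gamma>_def using hom \<sigma>G[OF that] g0 mulG ivG piv[OF that] p\<sigma>[OF that] Wf_eq[of t]
    by simp
  have c1: "continuous_on {0..b} (\<lambda>t. mul (\<sigma> t) g0)"
  proof -
    have "continuous_on {0..b} (\<lambda>t. (\<sigma> t, g0))" by (intro continuous_intros c\<sigma>)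
    moreover have "(\<lambda>t. (\<sigma> t, g0)) ` {0..b} \<subseteq> G \<times> G" using \<sigma>G g0 by auto
    ultimately show ?thesis using continuous_on_compose2[OF cmul, of "{0..b}" "\<lambda>t. (\<sigma> t, g0)"] by simp
  qed
  have c2: "continuous_on {0..b} (\<lambda>t. iv (\<sigma> t))"
    by (rule continuous_on_compose2[OF cinv c\<sigma>]) (use \<sigma>G in auto)
  have c\<gamma>: "continuous_on {0..b} \<gamma>"
  proof -
    have "continuous_on {0..b} (\<lambda>t. (mul (\<sigma> t) g0, iv (\<sigma> t)))" by (intro continuous_on_Pair c1 c2)
    moreover have "(\<lambda>t. (mul (\<sigma> t) g0, iv (\<sigma> t))) ` {0..b} \<subseteq> G \<times> G" using \<sigma>G g0 mulG ivG by auto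
    ultimately show ?thesis unfolding \<gamma>_def
      using continuous_on_compose2[OF cmul, of "{0..b}" "\<lambda>t. (mul (\<sigma> t) g0, iv (\<sigma> t))"] by simp
  qed
  have tl: "timelike_curve (p \<circ> \<gamma>) 0 b"
    unfolding timelike_curve_def
  proof (intro conjI ballI exI[of _ Wd])
    show "0 < b" using b by simp
    fix t assume t: "t \<in> {0..b}"
    show "(p \<circ> \<gamma>) t \<in> Sp" using \<gamma>G[OF t] surj by auto
    have dW: "(Wf has_vector_derivative Wd t) (at t within {0..b})"
      unfolding Wf_def Wd_def
      by (rule blk_deriv) (auto intro!: derivative_eq_intros simp: power2_eq_square algebra_simps)
    show "((p \<circ> \<gamma>) has_vector_derivative Wd t) (at t within {0..b})"
      by (rule has_vector_derivative_transform[OF t _ dW]) (simp add: p\<gamma>)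
    have "matrix_inv ((p \<circ> \<gamma>) t) = Wi t" using p\<gamma>[OF t] Wf_Wi Wi_Wf by (simp add: matrix_inv_eq)
    moreover have "Wd t ** Wi t \<in> sp_plus" unfolding X_eq
    proof (rule blk_sp_plus)
      have "0 \<le> t" "t \<le> 1/2" using t b by auto
      then have t2: "t^2 \<le> 1/4" using mult_mono[of t "1/2" t "1/2"] by (simp add: power2_eq_square)
      have "t^2 * t^2 \<le> t^2 * 1" using t2 by (intro mult_left_mono) auto
      then have t4: "t^4 \<le> t^2" by (simp add: power4_eq_xxxx power2_eq_square mult.assoc)
      then show "0 < 3/4 + 9/2*t^2 - 9/4*t^4" using t2 zero_le_power2[of t] by linarith
      have id: "(3/4 + 9/2*t^2 - 9/4*t^4) * - (9/4*t^2 - 3) - (15/4*t - 9/4*t^3)^2 = 9/4 * (1 - t^2)"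
        by (simp add: power2_eq_square power3_eq_cube power4_eq_xxxx field_simps)
      show "(15/4*t - 9/4*t^3)^2 < (3/4 + 9/2*t^2 - 9/4*t^4) * - (9/4*t^2 - 3)"
      proof -
        have pos: "0 < 9/4*(1-t^2)" using t2 by simp
        then show ?thesis unfolding id[symmetric] diff_gt_0_iff_gt .
      qed
    qed
    ultimately show "Wd t ** matrix_inv ((p \<circ> \<gamma>) t) \<in> sp_plus" by simp
  next
    show "continuous_on {0..b} Wd" unfolding Wd_def by (intro blk_cont continuous_intros)
  qed
  have "timelike_lift G p \<gamma> 0 b" unfolding timelike_lift_def using \<gamma>G c\<gamma> tl by auto
  then have "f (\<gamma> 0) < f (\<gamma> b)" using fincr[of \<gamma> 0 b 0 b] b by simp
  moreover have "\<gamma> 0 = g0" unfolding \<gamma>_def \<sigma>0 iv_e using lone rone g0 by simp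
  moreover have "f (\<gamma> b) = f g0" unfolding \<gamma>_def iv_def using finv g0 \<sigma>G b by simp
  ultimately show False by simp
qed

end
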